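(* Assume Assumptions 1, 2, 3 (stated in the context). If Line-Search (Algorithm 3, described in the context), called with input point $\theta$, makes infinitely many calls to subdivision, then $\theta$ is unsafe; in other words, $\theta$ cannot pass the safety check (Algorithm 2) under any finite spatial-temporal subdivision.
   Context: Problem: for $\theta$ and $t\in[0,T]$, body $i$ occupies $b_i(t,\theta)\subset\mathbb{R}^3$, obstacles occupy $o$; $\text{dist}$ is the shortest Euclidean distance between sets; $d_0\ge0$; $\mathcal{O}(\theta)$ twice differentiable cost. Assumption 1: finite decompositions $b_i=\bigcup_j b_{ij}$, $o=\bigcup_k o_k$ with each $(t,\theta)\mapsto\text{dist}(b_{ij}(t,\theta),o_k)$ sufficiently smooth. Assumption 2: the feasible domain of $t,\theta$ is bounded. Assumption 3: $\mathcal{P}$ sufficiently smooth, monotonically decreasing on $(0,\infty)$, $\lim_{x\to0}\mathcal{P}=\infty$, $\lim_{x\to\infty}\mathcal{P}=0$, $\lim_{x\to0}x\mathcal{P}(x)=\infty$. $L_1$: a constant with $|\text{dist}(b_{ij}(t_1,\theta),o_k)-\text{dist}(b_{ij}(t_2,\theta),o_k)|\le L_1|t_1-t_2|$ for all arguments. $\mathcal{P}_{ijk}(t,\theta)=\mathcal{P}(\text{dist}(b_{ij}(t,\theta),o_k)-d_0)$; per triple $(i,j,k)$ a finite partition of $[0,T]$ into intervals $[T_0^l,T_1^l]$; subdividing $(i,j,k,l)$ replaces the interval by its two halves; $\mathcal{P}_{ijkl}(\theta)=\mathcal{P}_{ijk}((T_0^l+T_1^l)/2,\theta)$; $\mathcal{E}=\mathcal{O}+\mu\sum_{ijkl}(T_1^l-T_0^l)\mathcal{P}_{ijkl}$,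 $\mu>0$. Directions $d^{(1)}=-\nabla_\theta\mathcal{E}$ or $d^{(2)}=\mathcal{M}(\nabla^2_\theta\mathcal{E})^{-1}d^{(1)}$ with $\underline\beta I\preceq\mathcal{M}(H)\preceq\bar\beta I$. Wolfe: $\mathcal{E}(\theta+d\alpha)\le\mathcal{E}(\theta)+c\langle d\alpha,\nabla\mathcal{E}\rangle$, $c\in(0,1)$. Safety check (Algorithm 2) at $\theta$: $\psi(x)=L_1x/2+L_2x^\eta$ ($L_2,\eta>0$); return a tuple $(i,j,k,l)$ with $\text{dist}(b_{ij}((T_0^l+T_1^l)/2,\theta),o_k)\le d_0+\psi(T_1^l-T_0^l)$ if one exists, else None (then $\theta$ passes / is safe; otherwise unsafe). Line-Search$(\theta,d,\epsilon_\alpha)$ (Algorithm 3; $\alpha_0>0,\gamma\in(0,1)$): $\alpha=\alpha_0$; while $\theta+d\alpha$ fails the safety check or Wolfe: if the check returned $(i,j,k,l)$, then if $\alpha\le\epsilon_\alpha$: $\epsilon_\alpha\leftarrow\gamma\epsilon_\alpha$, subdivide $(i,j,k,l)$, re-evaluate $\mathcal{E}$, recompute $d$; else $\alpha\leftarrow\gamma\alpha$; if only Wolfe fails, $\alpha\leftarrow\gamma\alpha$. Return $\alpha,\epsilon_\alpha$. *)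

theory Defs
  imports "HOL-Analysis.Analysis"
begin

definition C2_on :: "'b::euclidean_space set \<Rightarrow> ('b \<Rightarrow> real) \<Rightarrow> bool" where
  "C2_on S f \<longleftrightarrow> open S \<and>
     (\<exists>f' f''. (\<forall>x\<in>S. (f has_derivative blinfun_apply (f' x)) (at x)) \<and>
               (\<forall>x\<in>S. (f' has_derivative blinfun_apply (f'' x)) (at x)) \<and>
               continuous_on S f'')"

definition grad :: "(real^'n \<Rightarrow> real) \<Rightarrow> real^'n \<Rightarrow> real^'n" where
  "grad f x = (SOME g. (f has_derivative (\<lambda>h. g \<bullet> h)) (at x))"

definition hess :: "(real^'n \<Rightarrow> real) \<Rightarrow> real^'n \<Rightarrow> real^'n^'n" where
  "hess f x = (SOME H. (grad f has_derivative (\<lambda>h. H *v h)) (at x))"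

(* finite partition of [0,T] into closed intervals, represented by its finite set of breakpoints *)
definition is_partition :: "real \<Rightarrow> real set \<Rightarrow> bool" where
  "is_partition T A \<longleftrightarrow> finite A \<and> 0 \<in> A \<and> T \<in> A \<and> A \<subseteq> {0..T}"

definition intervals :: "real set \<Rightarrow> (real \<times> real) set" where
  "intervals A = {(a,b). a \<in> A \<and> b \<in> A \<and> a < b \<and> (\<forall>s\<in>A. \<not> (a < s \<and> s < b))}"

definition subdivide :: "('p \<Rightarrow> real set) \<Rightarrow> 'p \<Rightarrow> real \<Rightarrow> real \<Rightarrow> ('p \<Rightarrow> real set)" where
  "subdivide S p a b = S(p := insert ((a + b) / 2) (S p))"

(* dist(b_ij(t,theta), o_k); a triple (i,j,k) is a pair (q,k) where q indexes the body piece b_ij *)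
definition Dist :: "('q \<Rightarrow> real \<Rightarrow> 'th \<Rightarrow> (real^3) set) \<Rightarrow> ('k \<Rightarrow> (real^3) set)
     \<Rightarrow> 'q \<times> 'k \<Rightarrow> real \<Rightarrow> 'th \<Rightarrow> real" where
  "Dist bp ob p t th = setdist (bp (fst p) t th) (ob (snd p))"

definition psi :: "real \<Rightarrow> real \<Rightarrow> real \<Rightarrow> real \<Rightarrow> real" where
  "psi L1 L2 \<eta> x = L1 * x / 2 + L2 * x powr \<eta>"

(* the tuple (p,[a,b]) is returned by the safety check (Algorithm 2) at th under subdivision S *)
definition viol :: "('q \<Rightarrow> real \<Rightarrow> 'th \<Rightarrow> (real^3) set) \<Rightarrow> ('k \<Rightarrow> (real^3) set)
     \<Rightarrow> real \<Rightarrow> real \<Rightarrow> real \<Rightarrow> real \<Rightarrow> ('q \<times> 'k \<Rightarrow> real set) \<Rightarrow> 'th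
     \<Rightarrow> 'q \<times> 'k \<Rightarrow> real \<Rightarrow> real \<Rightarrow> bool" where
  "viol bp ob d0 L1 L2 \<eta> S th p a b \<longleftrightarrow>
     (a, b) \<in> intervals (S p) \<and> Dist bp ob p ((a + b) / 2) th \<le> d0 + psi L1 L2 \<eta> (b - a)"

definition check_fails :: "('q \<Rightarrow> real \<Rightarrow> 'th \<Rightarrow> (real^3) set) \<Rightarrow> ('k \<Rightarrow> (real^3) set)
     \<Rightarrow> real \<Rightarrow> real \<Rightarrow> real \<Rightarrow> real \<Rightarrow> ('q \<times> 'k \<Rightarrow> real set) \<Rightarrow> 'th \<Rightarrow> bool" where
  "check_fails bp ob d0 L1 L2 \<eta> S th \<longleftrightarrow> (\<exists>p a b. viol bp ob d0 L1 L2 \<eta> S th p a b)"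

definition energy :: "(real^'n \<Rightarrow> real) \<Rightarrow> (real \<Rightarrow> real) \<Rightarrow> real \<Rightarrow> real
     \<Rightarrow> ('q::finite \<Rightarrow> real \<Rightarrow> real^'n \<Rightarrow> (real^3) set) \<Rightarrow> ('k::finite \<Rightarrow> (real^3) set)
     \<Rightarrow> ('q \<times> 'k \<Rightarrow> real set) \<Rightarrow> real^'n \<Rightarrow> real" where
  "energy Obj P \<mu> d0 bp ob S th =
     Obj th + \<mu> * (\<Sum>p\<in>UNIV. \<Sum>ab\<in>intervals (S p).
        (snd ab - fst ab) * P (Dist bp ob p ((fst ab + snd ab) / 2) th - d0))"

definition direction :: "bool \<Rightarrow> (real^'n^'n \<Rightarrow> real^'n^'n) \<Rightarrow> (real^'n \<Rightarrow> real) \<Rightarrow> real^'n \<Rightarrow> real^'n" where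
  "direction newton M E th =
     (if newton then matrix_inv (M (hess E th)) *v (- grad E th) else - grad E th)"

(* Line-Search state: (alpha, eps_alpha, subdivision, direction).
   V S x p a b : check at x under S may return (p,[a,b]);
   Ef S : energy under S;  dirf S : recomputed direction under S (at th). *)
type_synonym ('p, 'n) ls_state = "real \<times> real \<times> ('p \<Rightarrow> real set) \<times> (real^'n)"

definition ls_subdiv_step :: "(('p \<Rightarrow> real set) \<Rightarrow> real^'n \<Rightarrow> 'p \<Rightarrow> real \<Rightarrow> real \<Rightarrow> bool)
     \<Rightarrow> (('p \<Rightarrow> real set) \<Rightarrow> real^'n) \<Rightarrow> real \<Rightarrow> real^'n
     \<Rightarrow> ('p, 'n) ls_state \<Rightarrow> ('p, 'n) ls_state \<Rightarrow> bool" where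
  "ls_subdiv_step V dirf \<gamma> th st st' \<longleftrightarrow>
     (case st of (\<alpha>, \<epsilon>, S, d) \<Rightarrow>
        \<alpha> \<le> \<epsilon> \<and>
        (\<exists>p a b. V S (th + \<alpha> *\<^sub>R d) p a b \<and>
           st' = (\<alpha>, \<gamma> * \<epsilon>, subdivide S p a b, dirf (subdivide S p a b))))"

definition ls_shrink_step :: "(('p \<Rightarrow> real set) \<Rightarrow> real^'n \<Rightarrow> 'p \<Rightarrow> real \<Rightarrow> real \<Rightarrow> bool)
     \<Rightarrow> (('p \<Rightarrow> real set) \<Rightarrow> real^'n \<Rightarrow> real) \<Rightarrow> real \<Rightarrow> real \<Rightarrow> real^'n
     \<Rightarrow> ('p, 'n) ls_state \<Rightarrow> ('p, 'n) ls_state \<Rightarrow> bool" where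
  "ls_shrink_step V Ef \<gamma> c th st st' \<longleftrightarrow>
     (case st of (\<alpha>, \<epsilon>, S, d) \<Rightarrow>
        st' = (\<gamma> * \<alpha>, \<epsilon>, S, d) \<and>
        ((\<epsilon> < \<alpha> \<and> (\<exists>p a b. V S (th + \<alpha> *\<^sub>R d) p a b)) \<or>
         ((\<forall>p a b. \<not> V S (th + \<alpha> *\<^sub>R d) p a b) \<and>
          \<not> (Ef S (th + \<alpha> *\<^sub>R d) \<le> Ef S th + c * ((\<alpha> *\<^sub>R d) \<bullet> grad (Ef S) th)))))"

end

theory Submission
  imports Defs
begin

lemma inv_bound:
  fixes A :: "real^'n^'n"
  assumes b: "0 < \<beta>" and pd: "\<forall>v. \<beta> * (v \<bullet> v) \<le> v \<bullet> (A *v v)"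
  shows "norm (matrix_inv A *v w) \<le> norm w / \<beta>"
proof -
  have ker: "\<forall>x. A *v x = 0 \<longrightarrow> x = 0"
  proof (intro allI impI)
    fix x assume "A *v x = 0"
    then have "\<beta> * (x \<bullet> x) \<le> 0" using pd[rule_format, of x] by simp
    then have "x \<bullet> x \<le> 0" using b by (simp add: mult_le_0_iff)
    then show "x = 0" by (metis inner_ge_zero inner_eq_zero_iff order_antisym)
  qed
  then have "invertible A"
    using matrix_left_invertible_ker invertible_left_inverse by blast
  then have "\<exists>A'. A ** A' = mat 1 \<and> A' ** A = mat 1" by (simp add: invertible_def)
  then have "A ** matrix_inv A = mat 1" unfolding matrix_inv_def by (rule someI_ex[THEN conjunct1])
  define u where "u = matrix_inv A *v w"
  have Au: "A *v u = w" unfolding u_def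
    by (simp add: matrix_vector_mul_assoc \<open>A ** matrix_inv A = mat 1\<close>)
  have "\<beta> * (norm u)^2 \<le> u \<bullet> w" using pd[rule_format, of u] Au by (simp add: power2_norm_eq_inner)
  also have "\<dots> \<le> norm u * norm w" by (rule norm_cauchy_schwarz)
  finally have "\<beta> * (norm u)^2 \<le> norm u * norm w" .
  then have "\<beta> * norm u \<le> norm w"
    by (cases "norm u = 0") (auto simp: power2_eq_square)
  then show ?thesis unfolding u_def[symmetric] using b by (simp add: field_simps)
qed

lemma lin_repr:
  fixes L :: "real^'n \<Rightarrow> real"
  assumes "linear L"
  shows "\<exists>g. \<forall>h. L h = g \<bullet> h"
proof -
  interpret linear L by fact
  have "L h = (\<chi> i. L (axis i 1)) \<bullet> h" for h
  proof -
    have "h = (\<Sum>i\<in>UNIV. h $ i *\<^sub>R axis i 1)"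
      using basis_expansion[of h] by (simp add: scalar_mult_eq_scaleR)
    then have "L h = L (\<Sum>i\<in>UNIV. h $ i *\<^sub>R axis i 1)" by simp
    also have "\<dots> = (\<Sum>i\<in>UNIV. L (h $ i *\<^sub>R axis i 1))" by (rule sum)
    also have "\<dots> = (\<Sum>i\<in>UNIV. h $ i * L (axis i 1))" by (simp add: scale)
    also have "\<dots> = (\<chi> i. L (axis i 1)) \<bullet> h" by (simp add: inner_vec_def mult.commute)
    finally show ?thesis .
  qed
  then show ?thesis by blast
qed

lemma sum_len:
  assumes "finite A" "A \<subseteq> {0..T}" "0 \<le> T"
  shows "(\<Sum>ab\<in>intervals A. snd ab - fst ab) \<le> T"
proof -
  have fin: "finite (intervals A)"
    by (rule finite_subset[of _ "A \<times> A"]) (auto simp: intervals_def assms)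
  have disj: "disjoint_family_on (\<lambda>ab. {fst ab..<snd ab}) (intervals A)"
    unfolding disjoint_family_on_def
  proof (intro ballI impI)
    fix x y assume x: "x \<in> intervals A" and y: "y \<in> intervals A" and ne: "x \<noteq> y"
    obtain a b where [simp]: "x = (a,b)" by (cases x)
    obtain a' b' where [simp]: "y = (a',b')" by (cases y)
    have xa: "a \<in> A" "b \<in> A" "a < b" "\<forall>s\<in>A. \<not> (a < s \<and> s < b)" using x by (auto simp: intervals_def)
    have ya: "a' \<in> A" "b' \<in> A" "a' < b'" "\<forall>s\<in>A. \<not> (a' < s \<and> s < b')" using y by (auto simp: intervals_def)
    show "{fst x..<snd x} \<inter> {fst y..<snd y} = {}"
    proof (rule ccontr)
      assume "{fst x..<snd x} \<inter> {fst y..<snd y} \<noteq> {}"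
      then have lt: "a < b'" "a' < b" by auto
      consider "a < a'" | "a' < a" | "a = a'" by linarith
      then show False
      proof cases
        case 1 then show ?thesis using xa(4) ya(1) lt by blast
      next
        case 2 then show ?thesis using ya(4) xa(1) lt by blast
      next
        case 3
        then have "b \<noteq> b'" using ne by auto
        then consider "b < b'" | "b' < b" by linarith
        then show ?thesis
        proof cases
          case 1 then show ?thesis using ya(4) xa(2,3) 3 by blast
        next
          case 2 then show ?thesis using xa(4) ya(2,3) 3 by blast
        qed
      qed
    qed
  qed
  have "(\<Sum>ab\<in>intervals A. snd ab - fst ab) = (\<Sum>ab\<in>intervals A. measure lborel {fst ab..<snd ab})"
    by (rule sum.cong) (auto simp: intervals_def)
  also have "\<dots> = measure lborel (\<Union>ab\<in>intervals A. {fst ab..<snd ab})"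
    by (rule measure_finite_Union[symmetric]) (use fin disj in \<open>auto simp: intervals_def emeasure_lborel_Ico\<close>)
  also have "\<dots> \<le> measure lborel {0..T}"
  proof (rule measure_mono_fmeasurable)
    show "(\<Union>ab\<in>intervals A. {fst ab..<snd ab}) \<subseteq> {0..T}"
      using assms(2) by (force simp: intervals_def)
  qed (use fin assms(3) in \<open>auto simp: fmeasurable_def emeasure_lborel_Icc\<close>)
  also have "\<dots> = T" using assms by simp
  finally show ?thesis .
qed

lemma part_cover:
  assumes "is_partition T A" "0 < T" "t \<in> {0..T}"
  shows "\<exists>a b. (a,b) \<in> intervals A \<and> a \<le> t \<and> t \<le> b"
proof -
  have fin: "finite A" and A0: "0 \<in> A" and AT: "T \<in> A" and sub: "A \<subseteq> {0..T}"
    using assms(1) by (auto simp: is_partition_def)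
  show ?thesis
  proof (cases "t < T")
    case True
    define a where "a = Max {s\<in>A. s \<le> t}"
    have ne1: "{s\<in>A. s \<le> t} \<noteq> {}" using A0 assms(3) by auto
    have a: "a \<in> A" "a \<le> t" using Max_in[OF _ ne1] fin unfolding a_def by auto
    have amax: "\<And>s. s \<in> A \<Longrightarrow> s \<le> t \<Longrightarrow> s \<le> a" unfolding a_def using fin by auto
    define b where "b = Min {s\<in>A. t < s}"
    have ne2: "{s\<in>A. t < s} \<noteq> {}" using AT True by auto
    have b: "b \<in> A" "t < b" using Min_in[OF _ ne2] fin unfolding b_def by auto
    have bmin: "\<And>s. s \<in> A \<Longrightarrow> t < s \<Longrightarrow> b \<le> s" unfolding b_def using fin by auto
    have nb: "\<forall>s\<in>A. \<not> (a < s \<and> s < b)"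
    proof (intro ballI notI)
      fix s assume s: "s \<in> A" "a < s \<and> s < b"
      show False by (cases "s \<le> t") (use amax[OF s(1)] bmin[OF s(1)] s(2) in auto)
    qed
    have "(a,b) \<in> intervals A"
      unfolding intervals_def using a b nb by auto
    then show ?thesis using a b by (intro exI[of _ a] exI[of _ b]) auto
  next
    case False
    then have tT: "t = T" using assms(3) by auto
    define a where "a = Max {s\<in>A. s < T}"
    have ne1: "{s\<in>A. s < T} \<noteq> {}" using A0 assms(2) by auto
    have a: "a \<in> A" "a < T" using Max_in[OF _ ne1] fin unfolding a_def by auto
    have amax: "\<And>s. s \<in> A \<Longrightarrow> s < T \<Longrightarrow> s \<le> a" unfolding a_def using fin by auto
    have "(a,T) \<in> intervals A"
      unfolding intervals_def using a AT amax by (auto simp: not_less)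
    then show ?thesis using a tT by (intro exI[of _ a] exI[of _ T]) auto
  qed
qed


lemma term_deriv:
  fixes bp :: "'q \<Rightarrow> real \<Rightarrow> real^'n \<Rightarrow> (real^3) set"
  assumes D': "((\<lambda>(t,x). Dist bp ob p t x) has_derivative blinfun_apply Dz) (at (t,\<theta>))"
    and P': "(P has_derivative blinfun_apply Py) (at (Dist bp ob p t \<theta> - d0))"
  shows "((\<lambda>x. P (Dist bp ob p t x - d0)) has_derivative
           (\<lambda>h. blinfun_apply Py (blinfun_apply Dz (0,h)))) (at \<theta>)"
proof -
  have 1: "((\<lambda>x. (t,x)) has_derivative (\<lambda>h. (0,h))) (at \<theta>)"
    by (rule has_derivative_Pair[OF has_derivative_const has_derivative_ident, simplified])
  have 2: "((\<lambda>x. Dist bp ob p t x) has_derivative (\<lambda>h. blinfun_apply Dz (0,h))) (at \<theta>)"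
    using has_derivative_compose[OF 1, of "\<lambda>(t,x). Dist bp ob p t x"] D' by simp
  have 3: "((\<lambda>x. Dist bp ob p t x - d0) has_derivative (\<lambda>h. blinfun_apply Dz (0,h))) (at \<theta>)"
    using has_derivative_diff[OF 2 has_derivative_const[of d0]] by simp
  show ?thesis
    using has_derivative_compose[OF 3, of P] P' by simp
qed

lemma C2_first:
  assumes "C2_on S f"
  shows "\<exists>f'. (\<forall>x\<in>S. (f has_derivative blinfun_apply (f' x)) (at x)) \<and> continuous_on S f'"
proof -
  obtain f' f'' where d1: "\<forall>x\<in>S. (f has_derivative blinfun_apply (f' x)) (at x)"
    and d2: "\<forall>x\<in>S. (f' has_derivative blinfun_apply (f'' x)) (at x)"
    using assms unfolding C2_on_def by blast
  have "continuous_on S f'"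
    using d2 by (intro continuous_at_imp_continuous_on ballI has_derivative_continuous) auto
  then show ?thesis using d1 by blast
qed



lemma grad_bound:
  fixes bp :: "'q::finite \<Rightarrow> real \<Rightarrow> real^'n \<Rightarrow> (real^3) set"
    and ob :: "'k::finite \<Rightarrow> (real^3) set"
    and Obj :: "real^'n \<Rightarrow> real" and P :: "real \<Rightarrow> real"
  assumes A1: "\<forall>p. C2_on UNIV (\<lambda>(t, x). Dist bp ob p t x)"
    and A3: "C2_on {0<..} P" and ObjC: "C2_on UNIV Obj" and T: "0 \<le> T" and mu: "0 \<le> \<mu>"
    and safe: "\<forall>p. \<forall>t\<in>{0..T}. d0 < Dist bp ob p t \<theta>"
  shows "\<exists>C. \<forall>S. (\<forall>p. is_partition T (S p)) \<longrightarrow> norm (grad (energy Obj P \<mu> d0 bp ob S) \<theta>) \<le> C"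
proof -
  have "\<forall>p. \<exists>f'. (\<forall>z\<in>UNIV. ((\<lambda>(t, x). Dist bp ob p t x) has_derivative blinfun_apply (f' z)) (at z)) \<and> continuous_on UNIV f'"
    using A1 C2_first by blast
  from choice[OF this] obtain D' where
    D': "\<And>p z. ((\<lambda>(t, x). Dist bp ob p t x) has_derivative blinfun_apply (D' p z)) (at z)"
    and cD: "\<And>p. continuous_on UNIV (D' p)" by blast
  obtain P' where P': "\<And>y. y \<in> {0<..} \<Longrightarrow> (P has_derivative blinfun_apply (P' y)) (at y)"
    and cP: "continuous_on {0<..} P'" using C2_first[OF A3] by blast
  obtain O' where O': "(Obj has_derivative blinfun_apply (O' \<theta>)) (at \<theta>)"
    using C2_first[OF ObjC] by blast
  have safe': "\<And>p t. t \<in> {0..T} \<Longrightarrow> d0 < Dist bp ob p t \<theta>" using safe by blast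
  define G where "G p t = norm (P' (Dist bp ob p t \<theta> - d0)) * norm (D' p (t,\<theta>))" for p t
  have contDist: "continuous_on UNIV (\<lambda>t. Dist bp ob p t \<theta>)" for p
  proof (intro continuous_at_imp_continuous_on ballI)
    fix t :: real
    have c1: "isCont (\<lambda>z. (\<lambda>(t, x). Dist bp ob p t x) z) (t,\<theta>)"
      by (rule has_derivative_continuous[OF D'])
    have c0: "isCont (\<lambda>t. (t,\<theta>)) t" by (intro continuous_intros)
    show "isCont (\<lambda>t. Dist bp ob p t \<theta>) t"
      using isCont_o2[OF c0 c1] by simp
  qed
  have contG: "continuous_on {0..T} (G p)" for p
  proof -
    have a: "continuous_on {0..T} (\<lambda>t. Dist bp ob p t \<theta> - d0)"
      by (intro continuous_intros continuous_on_subset[OF contDist]) auto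
    have b: "(\<lambda>t. Dist bp ob p t \<theta> - d0) ` {0..T} \<subseteq> {0<..}"
    proof (rule image_subsetI)
      fix t assume "t \<in> {0..T}"
      then show "Dist bp ob p t \<theta> - d0 \<in> {0<..}" using safe'[of t p] by simp
    qed
    have c: "continuous_on {0..T} (\<lambda>t. P' (Dist bp ob p t \<theta> - d0))"
      by (rule continuous_on_compose2[OF cP a b])
    have d: "continuous_on {0..T} (\<lambda>t. D' p (t,\<theta>))"
      by (rule continuous_on_compose2[OF cD]) (auto intro!: continuous_intros)
    show ?thesis unfolding G_def[abs_def]
      by (intro continuous_intros c d)
  qed
  have "\<exists>B>0. \<forall>t\<in>{0..T}. G p t \<le> B" for p
  proof -
    have "bounded (G p ` {0..T})"
      by (rule compact_imp_bounded[OF compact_continuous_image[OF contG compact_Icc]])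
    then obtain B where "B > 0" "\<forall>x\<in>G p ` {0..T}. norm x \<le> B" by (auto simp: bounded_pos)
    then show ?thesis by (intro exI[of _ B]) auto
  qed
  then have "\<forall>p. \<exists>B>0. \<forall>t\<in>{0..T}. G p t \<le> B" by blast
  from choice[OF this] obtain B where B: "\<And>p. B p > 0" "\<And>p t. t \<in> {0..T} \<Longrightarrow> G p t \<le> B p"
    by blast
  define C where "C = norm (O' \<theta>) + \<mu> * (\<Sum>p\<in>UNIV. B p * T)"
  have C0: "0 \<le> C" unfolding C_def using B(1) T mu
    by (intro add_nonneg_nonneg mult_nonneg_nonneg sum_nonneg) (auto intro: less_imp_le)
  show ?thesis
  proof (intro exI allI impI)
    fix S :: "'q \<times> 'k \<Rightarrow> real set"
    assume part: "\<forall>p. is_partition T (S p)"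
    have partp: "\<And>p. is_partition T (S p)" using part by blast
    define mid :: "real \<times> real \<Rightarrow> real" where "mid ab = (fst ab + snd ab) / 2" for ab
    have midin: "mid ab \<in> {0..T}" if "ab \<in> intervals (S p)" for p ab
    proof -
      have "fst ab \<in> S p" "snd ab \<in> S p" using that by (auto simp: intervals_def)
      then have "fst ab \<in> {0..T}" "snd ab \<in> {0..T}" using partp[of p] by (auto simp: is_partition_def)
      then show ?thesis unfolding mid_def by auto
    qed
    define E where "E = energy Obj P \<mu> d0 bp ob S"
    define L where "L h = blinfun_apply (O' \<theta>) h + \<mu> * (\<Sum>p\<in>UNIV. \<Sum>ab\<in>intervals (S p).
        (snd ab - fst ab) * blinfun_apply (P' (Dist bp ob p (mid ab) \<theta> - d0))
          (blinfun_apply (D' p (mid ab, \<theta>)) (0,h)))" for h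
    have Eeq: "E = (\<lambda>x. Obj x + \<mu> * (\<Sum>p\<in>UNIV. \<Sum>ab\<in>intervals (S p).
        (snd ab - fst ab) * P (Dist bp ob p (mid ab) x - d0)))"
      unfolding E_def mid_def by (rule ext) (simp add: energy_def)
    have t: "((\<lambda>x. (snd ab - fst ab) * P (Dist bp ob p (mid ab) x - d0)) has_derivative
        (\<lambda>h. (snd ab - fst ab) * blinfun_apply (P' (Dist bp ob p (mid ab) \<theta> - d0))
          (blinfun_apply (D' p (mid ab, \<theta>)) (0,h)))) (at \<theta>)"
      if "ab \<in> intervals (S p)" for p ab
    proof (rule has_derivative_mult_right, rule term_deriv[OF D' P'])
      show "Dist bp ob p (mid ab) \<theta> - d0 \<in> {0<..}" using safe'[of "mid ab" p] midin[OF that] by simp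
    qed
    have der: "(E has_derivative L) (at \<theta>)"
      unfolding Eeq L_def[abs_def]
      by (intro has_derivative_add O' has_derivative_mult_right has_derivative_sum t)
    have lin: "linear L" using der has_derivative_linear by blast
    obtain g where g: "\<forall>h. L h = g \<bullet> h" using lin_repr[OF lin] by blast
    have "(\<lambda>h. g \<bullet> h) = L" using g by auto
    then have "\<exists>g. (E has_derivative (\<lambda>h. g \<bullet> h)) (at \<theta>)" using der by auto
    then have "(E has_derivative (\<lambda>h. grad E \<theta> \<bullet> h)) (at \<theta>)"
      unfolding grad_def by (rule someI_ex)
    then have gr: "(\<lambda>h. grad E \<theta> \<bullet> h) = L" using has_derivative_unique der by blast
    have Lb: "\<bar>L h\<bar> \<le> C * norm h" for h
    proof -
      have tb: "\<bar>(snd ab - fst ab) * blinfun_apply (P' (Dist bp ob p (mid ab) \<theta> - d0))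
          (blinfun_apply (D' p (mid ab, \<theta>)) (0,h))\<bar> \<le> (snd ab - fst ab) * (B p * norm h)"
        if "ab \<in> intervals (S p)" for p ab
      proof -
        have len: "0 \<le> snd ab - fst ab" using that by (auto simp: intervals_def)
        have "\<bar>blinfun_apply (P' (Dist bp ob p (mid ab) \<theta> - d0)) (blinfun_apply (D' p (mid ab, \<theta>)) (0,h))\<bar>
            \<le> norm (P' (Dist bp ob p (mid ab) \<theta> - d0)) * norm (blinfun_apply (D' p (mid ab, \<theta>)) (0,h))"
          using norm_blinfun by (metis real_norm_def)
        also have "\<dots> \<le> norm (P' (Dist bp ob p (mid ab) \<theta> - d0)) * (norm (D' p (mid ab, \<theta>)) * norm h)"
          using norm_blinfun[of "D' p (mid ab, \<theta>)" "(0,h)"]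
          by (intro mult_left_mono) (auto simp: norm_Pair)
        also have "\<dots> = G p (mid ab) * norm h" unfolding G_def by simp
        also have "\<dots> \<le> B p * norm h" using B(2)[OF midin[OF that]] by (intro mult_right_mono) auto
        finally show ?thesis using len by (simp add: abs_mult mult_left_mono)
      qed
      have sb: "\<bar>\<Sum>ab\<in>intervals (S p). (snd ab - fst ab) * blinfun_apply (P' (Dist bp ob p (mid ab) \<theta> - d0))
          (blinfun_apply (D' p (mid ab, \<theta>)) (0,h))\<bar> \<le> B p * T * norm h" for p
      proof -
        have fin: "finite (S p)" "S p \<subseteq> {0..T}" using partp[of p] by (auto simp: is_partition_def)
        have "\<bar>\<Sum>ab\<in>intervals (S p). (snd ab - fst ab) * blinfun_apply (P' (Dist bp ob p (mid ab) \<theta> - d0))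
          (blinfun_apply (D' p (mid ab, \<theta>)) (0,h))\<bar> \<le> (\<Sum>ab\<in>intervals (S p). (snd ab - fst ab) * (B p * norm h))"
          by (rule order_trans[OF sum_abs sum_mono]) (rule tb)
        also have "\<dots> = (\<Sum>ab\<in>intervals (S p). snd ab - fst ab) * (B p * norm h)"
          by (simp add: sum_distrib_right)
        also have "\<dots> \<le> T * (B p * norm h)"
          using sum_len[OF fin T] B(1)[of p] by (intro mult_right_mono) auto
        finally show ?thesis by (simp add: algebra_simps)
      qed
      have "\<bar>L h\<bar> \<le> \<bar>blinfun_apply (O' \<theta>) h\<bar> + \<mu> * \<bar>\<Sum>p\<in>UNIV. \<Sum>ab\<in>intervals (S p).
        (snd ab - fst ab) * blinfun_apply (P' (Dist bp ob p (mid ab) \<theta> - d0))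
          (blinfun_apply (D' p (mid ab, \<theta>)) (0,h))\<bar>"
        unfolding L_def using mu by (simp add: abs_mult order_trans[OF abs_triangle_ineq])
      also have "\<dots> \<le> norm (O' \<theta>) * norm h + \<mu> * (\<Sum>p\<in>UNIV. B p * T * norm h)"
      proof (rule add_mono)
        show "\<bar>blinfun_apply (O' \<theta>) h\<bar> \<le> norm (O' \<theta>) * norm h"
          using norm_blinfun by (metis real_norm_def)
        show "\<mu> * \<bar>\<Sum>p\<in>UNIV. \<Sum>ab\<in>intervals (S p).
          (snd ab - fst ab) * blinfun_apply (P' (Dist bp ob p (mid ab) \<theta> - d0))
            (blinfun_apply (D' p (mid ab, \<theta>)) (0,h))\<bar> \<le> \<mu> * (\<Sum>p\<in>UNIV. B p * T * norm h)"
          using mu by (intro mult_left_mono order_trans[OF sum_abs sum_mono] sb) auto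
      qed
      also have "\<dots> = C * norm h" unfolding C_def by (simp add: algebra_simps sum_distrib_right sum_distrib_left)
      finally show ?thesis .
    qed
    have "(norm (grad E \<theta>))^2 = L (grad E \<theta>)"
      using fun_cong[OF gr, of "grad E \<theta>"] by (simp add: power2_norm_eq_inner)
    also have "\<dots> \<le> C * norm (grad E \<theta>)" using Lb by (meson abs_ge_self order_trans)
    finally have "norm (grad E \<theta>) * norm (grad E \<theta>) \<le> C * norm (grad E \<theta>)"
      by (simp add: power2_eq_square)
    then have "norm (grad E \<theta>) \<le> C" using C0
      by (cases "norm (grad E \<theta>) = 0") (auto simp: mult_le_cancel_right)
    then show "norm (grad (energy Obj P \<mu> d0 bp ob S) \<theta>) \<le> C" unfolding E_def .
  qed
qed


lemma margin1:
  fixes F :: "real \<times> (real^'n) \<Rightarrow> real"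
  assumes cF: "continuous_on UNIV F" and T: "0 \<le> T"
    and safe: "\<And>t. t \<in> {0..T} \<Longrightarrow> d0 < F (t,\<theta>)"
  shows "\<exists>m>0. \<exists>r>0. \<forall>t x. t \<in> {0..T} \<longrightarrow> dist x \<theta> < r \<longrightarrow> d0 + m < F (t,x)"
proof -
  have c1: "continuous_on {0..T} (\<lambda>t. F (t,\<theta>))"
    by (rule continuous_on_compose2[OF cF]) (auto intro!: continuous_intros)
  obtain t0 where t0: "t0 \<in> {0..T}" "\<And>t. t \<in> {0..T} \<Longrightarrow> F (t0,\<theta>) \<le> F (t,\<theta>)"
    using continuous_attains_inf[OF compact_Icc _ c1] T by auto
  define m where "m = (F (t0,\<theta>) - d0) / 2"
  have m: "m > 0" using safe[OF t0(1)] unfolding m_def by simp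
  define K where "K = {0..T} \<times> cball \<theta> 1"
  have "compact K" unfolding K_def by (intro compact_Times compact_Icc compact_cball)
  then have "uniformly_continuous_on K F"
    by (rule compact_uniformly_continuous[OF continuous_on_subset[OF cF subset_UNIV]])
  then obtain e where e: "e > 0" "\<And>z z'. z \<in> K \<Longrightarrow> z' \<in> K \<Longrightarrow> dist z' z < e \<Longrightarrow> dist (F z') (F z) < m"
    unfolding uniformly_continuous_on_def using m by metis
  have r0: "0 < min e 1" using e by simp
  have H: "\<forall>t x. t \<in> {0..T} \<longrightarrow> dist x \<theta> < min e 1 \<longrightarrow> d0 + m < F (t,x)"
  proof (intro allI impI)
    fix t x assume t: "t \<in> {0..T}" and x: "dist x \<theta> < min e 1"
    have in1: "(t,x) \<in> K" "(t,\<theta>) \<in> K" using t x unfolding K_def by (auto simp: dist_commute)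
    have "dist (t,x) (t,\<theta>) < e" using x by (simp add: dist_Pair_Pair)
    then have "dist (F (t,x)) (F (t,\<theta>)) < m" using e(2)[OF in1(2) in1(1)] by simp
    moreover have "F (t0,\<theta>) \<le> F (t,\<theta>)" using t0(2)[OF t] .
    ultimately have a1: "F (t,\<theta>) - F (t,x) < m" "F (t0,\<theta>) \<le> F (t,\<theta>)"
      unfolding dist_real_def by auto
    have a2: "F (t0,\<theta>) = d0 + 2 * m" unfolding m_def by (simp add: field_simps)
    show "d0 + m < F (t,x)" using a1 a2 by linarith
  qed
  show ?thesis using m r0 H by blast
qed

lemma margin:
  fixes bp :: "'q::finite \<Rightarrow> real \<Rightarrow> real^'n \<Rightarrow> (real^3) set"
    and ob :: "'k::finite \<Rightarrow> (real^3) set"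
  assumes A1: "\<forall>p. C2_on UNIV (\<lambda>(t, x). Dist bp ob p t x)" and T: "0 \<le> T"
    and safe: "\<And>p t. t \<in> {0..T} \<Longrightarrow> d0 < Dist bp ob p t \<theta>"
  shows "\<exists>m>0. \<exists>r>0. \<forall>p t x. t \<in> {0..T} \<longrightarrow> dist x \<theta> < r \<longrightarrow> d0 + m < Dist bp ob p t x"
proof -
  have "\<exists>m>0. \<exists>r>0. \<forall>t x. t \<in> {0..T} \<longrightarrow> dist x \<theta> < r \<longrightarrow> d0 + m < Dist bp ob p t x" for p
  proof -
    obtain f' where f': "\<forall>z\<in>UNIV. ((\<lambda>(t, x). Dist bp ob p t x) has_derivative blinfun_apply (f' z)) (at z)"
      using C2_first A1 by blast
    have cF: "continuous_on UNIV (\<lambda>(t, x). Dist bp ob p t x)"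
      using f' by (intro continuous_at_imp_continuous_on ballI has_derivative_continuous) auto
    show ?thesis using margin1[OF cF T, of d0 \<theta>] safe by simp
  qed
  then have "\<forall>p. \<exists>mr. fst mr > 0 \<and> snd mr > 0 \<and> (\<forall>t x. t \<in> {0..T} \<longrightarrow> dist x \<theta> < snd mr \<longrightarrow> d0 + fst mr < Dist bp ob p t x)"
    by (metis fst_conv snd_conv)
  from choice[OF this] obtain mr where mr: "\<And>p. fst (mr p) > 0" "\<And>p. snd (mr p) > 0"
    "\<And>p t x. t \<in> {0..T} \<Longrightarrow> dist x \<theta> < snd (mr p) \<Longrightarrow> d0 + fst (mr p) < Dist bp ob p t x"
    by blast
  define m where "m = Min (range (\<lambda>p. fst (mr p)))"
  define r where "r = Min (range (\<lambda>p. snd (mr p)))"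
  have m0: "m > 0" unfolding m_def using mr(1) by (subst Min_gr_iff) auto
  have r0: "r > 0" unfolding r_def using mr(2) by (subst Min_gr_iff) auto
  have mle: "m \<le> fst (mr p)" for p unfolding m_def by (rule Min_le) auto
  have rle: "r \<le> snd (mr p)" for p unfolding r_def by (rule Min_le) auto
  show ?thesis
  proof -
    have "\<forall>p t x. t \<in> {0..T} \<longrightarrow> dist x \<theta> < r \<longrightarrow> d0 + m < Dist bp ob p t x"
    proof (intro allI impI)
      fix p t x assume "t \<in> {0..T}" "dist x \<theta> < r"
      then show "d0 + m < Dist bp ob p t x" using mr(3)[of t x p] mle[of p] rle[of p] by auto
    qed
    then show ?thesis using m0 r0 by blast
  qed
qed



theorem lemma6:
  fixes bp :: "'q::finite \<Rightarrow> real \<Rightarrow> real^'n \<Rightarrow> (real^3) set"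
    and ob :: "'k::finite \<Rightarrow> (real^3) set"
    and Obj :: "real^'n \<Rightarrow> real"
    and P :: "real \<Rightarrow> real"
    and M :: "real^'n^'n \<Rightarrow> real^'n^'n"
    and \<Theta> :: "(real^'n) set"
    and \<theta> d :: "real^'n"
    and T d0 L1 L2 \<eta> \<mu> \<alpha>0 \<gamma> c \<epsilon>0 \<beta>lo \<beta>hi :: real
    and newton :: bool
    and S0 :: "'q \<times> 'k \<Rightarrow> real set"
    and run :: "nat \<Rightarrow> ('q \<times> 'k, 'n) ls_state"
  defines "V \<equiv> viol bp ob d0 L1 L2 \<eta>"
    and "Ef \<equiv> energy Obj P \<mu> d0 bp ob"
    and "dirf \<equiv> (\<lambda>S. direction newton M (energy Obj P \<mu> d0 bp ob S) \<theta>)"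
  assumes A1: "\<forall>p. C2_on UNIV (\<lambda>(t, x). Dist bp ob p t x)"
    and A2: "bounded \<Theta>" "\<theta> \<in> \<Theta>"
    and A3_smooth: "C2_on {0<..} P"
    and A3_mono: "\<forall>x y. 0 < x \<and> x \<le> y \<longrightarrow> P y \<le> P x"
    and A3_lim0: "filterlim P at_top (at_right 0)"
    and A3_liminf: "(P \<longlongrightarrow> 0) at_top"
    and A3_xP: "filterlim (\<lambda>x. x * P x) at_top (at_right 0)"
    and Lip: "\<forall>p t1 t2 x. \<bar>Dist bp ob p t1 x - Dist bp ob p t2 x\<bar> \<le> L1 * \<bar>t1 - t2\<bar>"
    and Obj_C2: "C2_on UNIV Obj"
    and T_pos: "0 < T" and d0_nonneg: "0 \<le> d0"
    and L2_pos: "0 < L2" and eta_pos: "0 < \<eta>" and mu_pos: "0 < \<mu>"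
    and alpha0_pos: "0 < \<alpha>0" and gamma: "0 < \<gamma>" "\<gamma> < 1" and c: "0 < c" "c < 1"
    and M_bounds: "0 < \<beta>lo" "\<beta>lo \<le> \<beta>hi"
      "\<forall>H. transpose (M H) = M H \<and>
           (\<forall>v. \<beta>lo * (v \<bullet> v) \<le> v \<bullet> (M H *v v) \<and> v \<bullet> (M H *v v) \<le> \<beta>hi * (v \<bullet> v))"
    and S0_part: "\<forall>p. is_partition T (S0 p)"
    and run0: "run 0 = (\<alpha>0, \<epsilon>0, S0, d)"
    and run_steps: "\<forall>n. ls_subdiv_step V dirf \<gamma> \<theta> (run n) (run (Suc n)) \<or>
                        ls_shrink_step V Ef \<gamma> c \<theta> (run n) (run (Suc n))"
    and inf_subdiv: "infinite {n. ls_subdiv_step V dirf \<gamma> \<theta> (run n) (run (Suc n))}"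
  shows "\<forall>S. (\<forall>p. is_partition T (S p)) \<longrightarrow> check_fails bp ob d0 L1 L2 \<eta> S \<theta>"
proof (rule ccontr)
  assume "\<not> ?thesis"
  then obtain S' where S'p: "\<And>p. is_partition T (S' p)"
    and nf: "\<not> check_fails bp ob d0 L1 L2 \<eta> S' \<theta>" by blast
  have L1nn: "0 \<le> L1"
  proof -
    have "\<bar>Dist bp ob undefined 1 \<theta> - Dist bp ob undefined 0 \<theta>\<bar> \<le> L1 * \<bar>1 - 0\<bar>"
      using Lip by blast
    then show ?thesis using abs_ge_zero[of "Dist bp ob undefined 1 \<theta> - Dist bp ob undefined 0 \<theta>"]
      by simp
  qed
  have safe: "\<forall>p. \<forall>t\<in>{0..T}. d0 < Dist bp ob p t \<theta>"
  proof (intro allI ballI, rule ccontr)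
    fix p t assume t: "t \<in> {0..T}" and nt: "\<not> d0 < Dist bp ob p t \<theta>"
    obtain a b where ab: "(a,b) \<in> intervals (S' p)" "a \<le> t" "t \<le> b"
      using part_cover[OF S'p[of p] T_pos t] by blast
    have ablt: "a < b" using ab(1) by (simp add: intervals_def)
    have "Dist bp ob p ((a+b)/2) \<theta> - Dist bp ob p t \<theta> \<le> L1 * \<bar>(a+b)/2 - t\<bar>"
      using Lip by (metis abs_le_D1)
    moreover have "\<bar>(a+b)/2 - t\<bar> \<le> (b - a)/2" using ab(2,3) by (simp add: abs_le_iff field_simps)
    ultimately have "Dist bp ob p ((a+b)/2) \<theta> - Dist bp ob p t \<theta> \<le> L1 * ((b - a)/2)"
      using L1nn by (meson mult_left_mono order_trans)
    moreover have "0 < L2 * (b - a) powr \<eta>" using ablt L2_pos by simp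
    ultimately have "Dist bp ob p ((a+b)/2) \<theta> \<le> d0 + psi L1 L2 \<eta> (b - a)"
      using nt unfolding psi_def by (simp add: field_simps)
    then have "check_fails bp ob d0 L1 L2 \<eta> S' \<theta>"
      unfolding check_fails_def viol_def using ab(1) by blast
    then show False using nf by blast
  qed
  obtain m r where m0: "0 < m" and r0: "0 < r"
    and mr: "\<And>p t x. t \<in> {0..T} \<Longrightarrow> dist x \<theta> < r \<Longrightarrow> d0 + m < Dist bp ob p t x"
    using margin[OF A1 _ , of T d0 \<theta>] T_pos safe by auto
  obtain C where C: "\<forall>S. (\<forall>p. is_partition T (S p)) \<longrightarrow> norm (grad (energy Obj P \<mu> d0 bp ob S) \<theta>) \<le> C"
  proof -
    have T0: "0 \<le> T" using T_pos by simp
    have mu0: "0 \<le> \<mu>" using mu_pos by simp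
    show ?thesis using grad_bound[OF A1 A3_smooth Obj_C2 T0 mu0 safe] that by blast
  qed
  have C0: "0 \<le> C" using C S'p by (meson norm_ge_zero order_trans)
  define Cd where "Cd = C + C / \<beta>lo"
  have Cd0: "0 \<le> Cd" unfolding Cd_def using C0 M_bounds(1) by simp
  have dirb: "norm (dirf S) \<le> Cd" if Sp: "\<forall>p. is_partition T (S p)" for S
  proof -
    define g where "g = grad (energy Obj P \<mu> d0 bp ob S) \<theta>"
    have gC: "norm g \<le> C" unfolding g_def using C Sp by blast
    show ?thesis
    proof (cases newton)
      case True
      have pd: "\<forall>v. \<beta>lo * (v \<bullet> v) \<le> v \<bullet> (M H *v v)" for H using M_bounds(3) by blast
      have "norm (dirf S) = norm (matrix_inv (M (hess (energy Obj P \<mu> d0 bp ob S) \<theta>)) *v (- g))"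
        unfolding dirf_def direction_def g_def using True by simp
      also have "\<dots> \<le> norm (- g) / \<beta>lo" by (rule inv_bound[OF M_bounds(1) pd])
      also have "\<dots> \<le> C / \<beta>lo" using gC M_bounds(1) by (simp add: divide_right_mono)
      also have "\<dots> \<le> Cd" unfolding Cd_def using C0 by simp
      finally show ?thesis .
    next
      case False
      have "norm (dirf S) = norm g"
        unfolding dirf_def direction_def g_def using False by simp
      also have "\<dots> \<le> Cd" unfolding Cd_def using gC C0 M_bounds(1) by (simp add: add_increasing2)
      finally show ?thesis .
    qed
  qed
  define \<alpha> where "\<alpha> n = fst (run n)" for n
  define \<epsilon> where "\<epsilon> n = fst (snd (run n))" for n
  define SS where "SS n = fst (snd (snd (run n)))" for n
  define dd where "dd n = snd (snd (snd (run n)))" for n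
  have run_eq: "run n = (\<alpha> n, \<epsilon> n, SS n, dd n)" for n
    unfolding \<alpha>_def \<epsilon>_def SS_def dd_def by simp
  define I where "I = {n. ls_subdiv_step V dirf \<gamma> \<theta> (run n) (run (Suc n))}"
  have subI: "\<alpha> n \<le> \<epsilon> n \<and> (\<exists>p a b. V (SS n) (\<theta> + \<alpha> n *\<^sub>R dd n) p a b \<and>
      run (Suc n) = (\<alpha> n, \<gamma> * \<epsilon> n, subdivide (SS n) p a b, dirf (subdivide (SS n) p a b)))"
    if "n \<in> I" for n
  proof -
    have "ls_subdiv_step V dirf \<gamma> \<theta> (run n) (run (Suc n))" using that unfolding I_def by simp
    then show ?thesis unfolding ls_subdiv_step_def run_eq[of n] by simp
  qed
  have shrI: "run (Suc n) = (\<gamma> * \<alpha> n, \<epsilon> n, SS n, dd n)" if "n \<notin> I" for n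
  proof -
    have "ls_shrink_step V Ef \<gamma> c \<theta> (run n) (run (Suc n))" using that run_steps unfolding I_def by blast
    then show ?thesis unfolding ls_shrink_step_def run_eq[of n] by simp
  qed
  have subS: "\<alpha> (Suc n) = \<alpha> n \<and> \<epsilon> (Suc n) = \<gamma> * \<epsilon> n \<and> dd (Suc n) = dirf (SS (Suc n))
      \<and> (\<exists>p a b. V (SS n) (\<theta> + \<alpha> n *\<^sub>R dd n) p a b \<and> SS (Suc n) = subdivide (SS n) p a b)"
    if nI: "n \<in> I" for n
  proof -
    obtain p a b where h: "V (SS n) (\<theta> + \<alpha> n *\<^sub>R dd n) p a b"
      "run (Suc n) = (\<alpha> n, \<gamma> * \<epsilon> n, subdivide (SS n) p a b, dirf (subdivide (SS n) p a b))"
      using subI[OF nI] by blast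
    have "\<alpha> (Suc n) = \<alpha> n" "\<epsilon> (Suc n) = \<gamma> * \<epsilon> n" "SS (Suc n) = subdivide (SS n) p a b"
      "dd (Suc n) = dirf (SS (Suc n))"
      using h(2) unfolding \<alpha>_def \<epsilon>_def SS_def dd_def by simp_all
    then show ?thesis using h(1) by blast
  qed
  have shrS: "\<alpha> (Suc n) = \<gamma> * \<alpha> n \<and> \<epsilon> (Suc n) = \<epsilon> n \<and> SS (Suc n) = SS n \<and> dd (Suc n) = dd n"
    if "n \<notin> I" for n
    using shrI[OF that] unfolding \<alpha>_def \<epsilon>_def SS_def dd_def by simp
  have init: "\<alpha> 0 = \<alpha>0" "\<epsilon> 0 = \<epsilon>0" "SS 0 = S0"
    unfolding \<alpha>_def \<epsilon>_def SS_def using run0 by simp_all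
  have Vint: "(a, b) \<in> intervals (S p)" if "V S x p a b" for S x p a b
    using that unfolding V_def viol_def by blast
  have part_sub: "is_partition T ((subdivide S p a b) q)"
    if "\<forall>q. is_partition T (S q)" "(a, b) \<in> intervals (S p)" for S p a b q
  proof -
    have "a \<in> S p" "b \<in> S p" using that(2) by (auto simp: intervals_def)
    moreover have "S p \<subseteq> {0..T}" using that(1) unfolding is_partition_def by blast
    ultimately have "a \<in> {0..T}" "b \<in> {0..T}" by blast+
    then have "(a + b) / 2 \<in> {0..T}" by auto
    then show ?thesis using that(1) unfolding subdivide_def is_partition_def by auto
  qed
  have inv: "0 < \<alpha> n \<and> (\<forall>p. is_partition T (SS n p))" for n
  proof (induction n)
    case 0
    then show ?case using init alpha0_pos S0_part by simp
  next
    case (Suc n)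
    show ?case
    proof (cases "n \<in> I")
      case True
      then obtain p a b where V: "V (SS n) (\<theta> + \<alpha> n *\<^sub>R dd n) p a b"
        and S: "SS (Suc n) = subdivide (SS n) p a b" and al: "\<alpha> (Suc n) = \<alpha> n"
        using subS by blast
      have "is_partition T (SS (Suc n) q)" for q
      proof -
        have IH': "\<forall>q. is_partition T (SS n q)" using Suc.IH by blast
        show ?thesis unfolding S by (rule part_sub[OF IH' Vint[OF V]])
      qed
      then show ?thesis using Suc.IH al by simp
    next
      case False
      then show ?thesis using shrS[OF False] Suc.IH gamma by simp
    qed
  qed
  have SSmono1: "SS n p \<subseteq> SS (Suc n) p" for n p
  proof (cases "n \<in> I")
    case True
    then obtain p' a b where S: "SS (Suc n) = subdivide (SS n) p' a b" using subS by blast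
    then show ?thesis unfolding subdivide_def by auto
  next
    case False
    then show ?thesis using shrS[OF False] by simp
  qed
  have SSmono: "SS n p \<subseteq> SS k p" if "n \<le> k" for n k p
    using lift_Suc_mono_le[of "\<lambda>n. SS n p", OF SSmono1 that] .
  have eps1: "\<bar>\<epsilon> (Suc n)\<bar> \<le> \<bar>\<epsilon> n\<bar>" for n
  proof (cases "n \<in> I")
    case True
    then have "\<epsilon> (Suc n) = \<gamma> * \<epsilon> n" using subS by blast
    then show ?thesis using gamma by (simp add: abs_mult mult_left_le_one_le)
  next
    case False
    then show ?thesis using shrS[OF False] by simp
  qed
  have epsmono: "\<bar>\<epsilon> k\<bar> \<le> \<bar>\<epsilon> n\<bar>" if "n \<le> k" for n k
    using lift_Suc_antimono_le[of "\<lambda>n. \<bar>\<epsilon> n\<bar>", OF eps1 that] .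
  have Iunb: "\<exists>n\<ge>N. n \<in> I" for N
    using inf_subdiv unfolding I_def infinite_nat_iff_unbounded_le by blast
  have epsK: "\<exists>N. \<forall>n\<ge>N. \<bar>\<epsilon> n\<bar> \<le> \<gamma> ^ K * \<bar>\<epsilon>0\<bar>" for K
  proof (induction K)
    case 0
    then show ?case using epsmono[of 0] init by auto
  next
    case (Suc K)
    then obtain N where N: "\<forall>n\<ge>N. \<bar>\<epsilon> n\<bar> \<le> \<gamma> ^ K * \<bar>\<epsilon>0\<bar>" by blast
    obtain n0 where n0: "n0 \<ge> N" "n0 \<in> I" using Iunb by blast
    have "\<epsilon> (Suc n0) = \<gamma> * \<epsilon> n0" using subS[OF n0(2)] by blast
    then have "\<bar>\<epsilon> (Suc n0)\<bar> \<le> \<gamma> ^ Suc K * \<bar>\<epsilon>0\<bar>"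
      using N n0(1) gamma by (simp add: abs_mult mult_left_mono)
    then show ?case using epsmono[of "Suc n0"] by (meson order_trans)
  qed
  obtain n1 where n1: "n1 \<in> I" using Iunb by blast
  have dinv: "n1 < n \<longrightarrow> dd n = dirf (SS n)" for n
  proof (induction n)
    case 0
    then show ?case by simp
  next
    case (Suc n)
    show ?case
    proof (cases "n \<in> I")
      case True
      then show ?thesis using subS by blast
    next
      case False
      then have "n \<noteq> n1" using n1 by auto
      then show ?thesis using Suc.IH shrS[OF False] by auto
    qed
  qed
  have psilim: "((\<lambda>l. psi L1 L2 \<eta> l) \<longlongrightarrow> 0) (at_right 0)"
  proof -
    have l0: "((\<lambda>l::real. l) \<longlongrightarrow> 0) (at_right 0)" by (rule tendsto_ident_at)
    have "((\<lambda>l::real. l powr \<eta>) \<longlongrightarrow> 0) (at_right 0)"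
      by (rule tendsto_zero_powrI[OF l0 tendsto_const _ eta_pos])
         (auto simp: eventually_at_right_field intro: exI[of _ 1])
    then have "((\<lambda>l. L1 * l / 2 + L2 * l powr \<eta>) \<longlongrightarrow> L1 * 0 / 2 + L2 * 0) (at_right 0)"
      by (intro tendsto_intros l0) auto
    then show ?thesis unfolding psi_def[abs_def] by simp
  qed
  from order_tendstoD(2)[OF psilim m0] obtain \<delta> where \<delta>: "\<delta> > 0"
    "\<And>l. 0 < l \<Longrightarrow> l < \<delta> \<Longrightarrow> psi L1 L2 \<eta> l < m"
    unfolding eventually_at_right_field by auto
  have rpos: "0 < r / (\<bar>\<epsilon>0\<bar> * Cd + 1)" using r0 Cd0 by (simp add: add_nonneg_pos)
  obtain K where K: "\<gamma> ^ K < r / (\<bar>\<epsilon>0\<bar> * Cd + 1)"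
    using real_arch_pow_inv[OF rpos gamma(2)] by blast
  obtain N where N: "\<And>n. n \<ge> N \<Longrightarrow> \<bar>\<epsilon> n\<bar> \<le> \<gamma> ^ K * \<bar>\<epsilon>0\<bar>" using epsK by blast
  define sel where "sel n = (SOME x. V (SS n) (\<theta> + \<alpha> n *\<^sub>R dd n) (fst x) (fst (snd x)) (snd (snd x))
      \<and> SS (Suc n) = subdivide (SS n) (fst x) (fst (snd x)) (snd (snd x)))" for n
  define pn where "pn n = fst (sel n)" for n
  define an where "an n = fst (snd (sel n))" for n
  define bn where "bn n = snd (snd (sel n))" for n
  have selI: "V (SS n) (\<theta> + \<alpha> n *\<^sub>R dd n) (pn n) (an n) (bn n)
      \<and> SS (Suc n) = subdivide (SS n) (pn n) (an n) (bn n)" if nI: "n \<in> I" for n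
  proof -
    obtain p a b where "V (SS n) (\<theta> + \<alpha> n *\<^sub>R dd n) p a b" "SS (Suc n) = subdivide (SS n) p a b"
      using subS[OF nI] by blast
    then have "\<exists>x. V (SS n) (\<theta> + \<alpha> n *\<^sub>R dd n) (fst x) (fst (snd x)) (snd (snd x))
      \<and> SS (Suc n) = subdivide (SS n) (fst x) (fst (snd x)) (snd (snd x))"
      by (intro exI[of _ "(p,a,b)"]) simp
    then show ?thesis unfolding pn_def an_def bn_def sel_def by (rule someI_ex)
  qed
  define mid where "mid n = (an n + bn n) / 2" for n
  have intv: "(an n, bn n) \<in> intervals (SS n (pn n))" if nI: "n \<in> I" for n
    using selI[OF nI] Vint by blast
  have ablt: "an n < bn n" if nI: "n \<in> I" for n
    using intv[OF nI] by (simp add: intervals_def)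
  have midT: "mid n \<in> {0..T}" if nI: "n \<in> I" for n
  proof -
    have "an n \<in> SS n (pn n)" "bn n \<in> SS n (pn n)" using intv[OF nI] by (auto simp: intervals_def)
    moreover have "SS n (pn n) \<subseteq> {0..T}" using inv[of n] unfolding is_partition_def by blast
    ultimately have "an n \<in> {0..T}" "bn n \<in> {0..T}" by blast+
    then show ?thesis unfolding mid_def by auto
  qed
  have midS: "mid n \<in> SS (Suc n) (pn n)" if nI: "n \<in> I" for n
    using selI[OF nI] unfolding subdivide_def mid_def by simp
  define Lg where "Lg = {n \<in> I. \<delta> \<le> bn n - an n}"
  have sep: "\<delta> / 2 \<le> \<bar>mid n - mid k\<bar>"
    if nL: "n \<in> Lg" and kL: "k \<in> Lg" and nk: "n < k" and pp: "pn n = pn k" for n k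
  proof -
    have nI: "n \<in> I" and kI: "k \<in> I" and kd: "\<delta> \<le> bn k - an k" using nL kL unfolding Lg_def by auto
    have "mid n \<in> SS k (pn k)" using midS[OF nI] SSmono[of "Suc n" k "pn n"] nk pp by auto
    then have "\<not> (an k < mid n \<and> mid n < bn k)" using intv[OF kI] unfolding intervals_def by blast
    then have "mid n \<le> an k \<or> bn k \<le> mid n" by linarith
    then show ?thesis using kd unfolding mid_def[of k] by (auto simp: abs_if field_simps)
  qed
  have fclose: "\<bar>x - y\<bar> < 1" if "\<lfloor>x\<rfloor> = \<lfloor>y\<rfloor>" for x y :: real
  proof -
    have "of_int \<lfloor>x\<rfloor> \<le> x" "x < of_int \<lfloor>x\<rfloor> + 1" "of_int \<lfloor>y\<rfloor> \<le> y" "y < of_int \<lfloor>y\<rfloor> + 1"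
      by (simp_all add: of_int_floor_le real_of_int_floor_add_one_gt)
    then show ?thesis using that by (simp add: abs_less_iff) linarith
  qed
  define key where "key n = (pn n, \<lfloor>2 * mid n / \<delta>\<rfloor>)" for n
  have close: "\<bar>mid n - mid k\<bar> < \<delta> / 2" if "key n = key k" for n k
  proof -
    have "\<bar>2 * mid n / \<delta> - 2 * mid k / \<delta>\<bar> < 1" using fclose that unfolding key_def by simp
    moreover have "\<bar>2 * mid n / \<delta> - 2 * mid k / \<delta>\<bar> = \<bar>mid n - mid k\<bar> * (2 / \<delta>)"
    proof -
      have "2 * mid n / \<delta> - 2 * mid k / \<delta> = (mid n - mid k) * (2 / \<delta>)"
        using \<delta>(1) by (simp add: field_simps)
      moreover have "\<bar>2 / \<delta>\<bar> = 2 / \<delta>" using \<delta>(1) by simp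
      ultimately show ?thesis by (simp only: abs_mult)
    qed
    ultimately have "\<bar>mid n - mid k\<bar> * (2 / \<delta>) < 1" by simp
    then show ?thesis using \<delta>(1) by (simp add: field_simps)
  qed
  have injk: "inj_on key Lg"
  proof (rule inj_onI)
    fix n k assume nL: "n \<in> Lg" and kL: "k \<in> Lg" and eq: "key n = key k"
    have pp: "pn n = pn k" using eq unfolding key_def by simp
    show "n = k"
    proof (rule ccontr)
      assume "n \<noteq> k"
      then consider "n < k" | "k < n" by linarith
      then show False
      proof cases
        case 1 then show ?thesis using sep[OF nL kL 1 pp] close[OF eq] by linarith
      next
        case 2 then show ?thesis using sep[OF kL nL 2 pp[symmetric]] close[OF eq[symmetric]] by linarith
      qed
    qed
  qed
  have keyimg: "key ` Lg \<subseteq> UNIV \<times> {0..\<lfloor>2 * T / \<delta>\<rfloor>}"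
  proof (rule image_subsetI)
    fix n assume "n \<in> Lg"
    then have mt: "mid n \<in> {0..T}" using midT unfolding Lg_def by blast
    have "0 \<le> 2 * mid n / \<delta>" using mt \<delta>(1) by simp
    moreover have "2 * mid n / \<delta> \<le> 2 * T / \<delta>" using mt \<delta>(1) by (simp add: divide_right_mono)
    ultimately show "key n \<in> UNIV \<times> {0..\<lfloor>2 * T / \<delta>\<rfloor>}" unfolding key_def
      by (auto intro: floor_mono)
  qed
  have "finite (UNIV \<times> {0..\<lfloor>2 * T / \<delta>\<rfloor>} :: (('q \<times> 'k) \<times> int) set)" by simp
  then have "finite (key ` Lg)" using keyimg finite_subset by blast
  then have finL: "finite Lg" using injk finite_imageD by blast
  have "infinite (I - Lg)" using inf_subdiv finL unfolding I_def by (simp add: Diff_infinite_finite)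
  then obtain n where nIL: "n \<in> I - Lg" and nge: "n \<ge> max N (Suc n1)"
    unfolding infinite_nat_iff_unbounded_le by blast
  have nI: "n \<in> I" using nIL by blast
  have short: "bn n - an n < \<delta>" using nIL unfolding Lg_def by auto
  have psim: "psi L1 L2 \<eta> (bn n - an n) < m" using \<delta>(2) ablt[OF nI] short by simp
  have ddn: "dd n = dirf (SS n)" using dinv[of n] nge by simp
  have ddb: "norm (dd n) \<le> Cd" unfolding ddn using dirb inv[of n] by blast
  have an0: "0 < \<alpha> n" using inv[of n] by blast
  have ae: "\<alpha> n \<le> \<gamma> ^ K * \<bar>\<epsilon>0\<bar>"
    using subS[OF nI] subI[OF nI] N[of n] nge by (meson abs_ge_self max.boundedE order_trans)
  have "dist (\<theta> + \<alpha> n *\<^sub>R dd n) \<theta> = \<alpha> n * norm (dd n)" using an0 by (simp add: dist_norm)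
  also have "\<dots> \<le> (\<gamma> ^ K * \<bar>\<epsilon>0\<bar>) * Cd"
    using ae ddb an0 by (intro mult_mono) auto
  also have "\<dots> \<le> \<gamma> ^ K * (\<bar>\<epsilon>0\<bar> * Cd + 1)" using gamma(1) by (simp add: algebra_simps)
  also have "\<dots> < r"
  proof -
    have pos: "0 < \<bar>\<epsilon>0\<bar> * Cd + 1" using Cd0 by (simp add: add_nonneg_pos)
    show ?thesis using K pos_less_divide_eq[OF pos] by blast
  qed
  finally have dr: "dist (\<theta> + \<alpha> n *\<^sub>R dd n) \<theta> < r" .
  have viol: "Dist bp ob (pn n) (mid n) (\<theta> + \<alpha> n *\<^sub>R dd n) \<le> d0 + psi L1 L2 \<eta> (bn n - an n)"
    using selI[OF nI] unfolding V_def viol_def mid_def by blast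
  have "d0 + m < Dist bp ob (pn n) (mid n) (\<theta> + \<alpha> n *\<^sub>R dd n)"
    using mr[OF midT[OF nI] dr] .
  then show False using viol psim by linarith
qed


end
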